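(* Let $f,g$ be complex-valued functions of two variables with $f\perp g$ and $g(x,y)=-g(y,x)$ for all $x,y$. Let $\{a_i\}_{i\in\mathbb{Z}},\{b_i\}_{i\in\mathbb{Z}}$ be sequences and $m\ge0$, $n\ge1$ integers such that all quantities $f(a_j,b_m)$, $g(b_j,b_m)$ ($j\ne m$), $f(a_j,b_{-n})$ and $g(b_j,b_{-n})$ ($j\neq -n$) with $-n\le j\le m$ are nonzero. Then $$\sum_{k=-n}^{m}f(a_k,b_k)\frac{\prod_{j=m}^{k-1}g(b_j,b_m)}{\prod_{j=m}^{k}f(a_j,b_m)}\frac{\prod_{j=1}^{k-1}f(a_j,b_{-n})}{\prod_{j=1}^{k}g(b_j,b_{-n})}=0.$$
   Context: $f\perp g$ means $g(u,v)f(z,w)-g(u,w)f(z,v)+g(v,w)f(z,u)=0$ for all $u,v,w,z$. Products over integer ranges follow the convention: $\prod_{j=k}^{m}A_j=A_k\cdots A_m$ if $m\ge k$; $=1$ if $m=k-1$; $=(A_{m+1}\cdots A_{k-1})^{-1}$ if $m\le k-2$. *)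

theory Defs
  imports Complex_Main
begin

definition perp :: "('a \<Rightarrow> 'a \<Rightarrow> complex) \<Rightarrow> ('a \<Rightarrow> 'a \<Rightarrow> complex) \<Rightarrow> bool" where
  "perp f g \<longleftrightarrow> (\<forall>u v w z. g u v * f z w - g u w * f z v + g v w * f z u = 0)"

definition prodZ :: "(int \<Rightarrow> complex) \<Rightarrow> int \<Rightarrow> int \<Rightarrow> complex" where
  "prodZ A k m =
     (if m \<ge> k then (\<Prod>j\<in>{k..m}. A j)
      else if m = k - 1 then 1
      else inverse (\<Prod>j\<in>{m+1..k-1}. A j))"

end

theory Submission
  imports Defs
begin

lemma prodZ_step:
  assumes "A m \<noteq> 0 \<or> k \<le> m"
  shows "prodZ A k m = prodZ A k (m - 1) * A m"
proof -
  consider "m \<ge> k + 1" | "m = k" | "m = k - 1" | "m \<le> k - 2" by linarith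
  then show ?thesis
  proof cases
    case 1
    have "{k..m} = insert m {k..m-1}" using 1 by auto
    then show ?thesis using 1 by (simp add: prodZ_def mult.commute)
  next
    case 2 then show ?thesis by (simp add: prodZ_def)
  next
    case 3
    then have "A m \<noteq> 0" using assms by auto
    then show ?thesis using 3 by (simp add: prodZ_def)
  next
    case 4
    then have nz: "A m \<noteq> 0" using assms by auto
    have "{m..k-1} = insert m {m+1..k-1}" using 4 by auto
    then have "(\<Prod>j\<in>{m..k-1}. A j) = A m * (\<Prod>j\<in>{m+1..k-1}. A j)" by simp
    then show ?thesis using 4 nz by (simp add: prodZ_def nonzero_inverse_mult_distrib)
  qed
qed

lemma telescope_int:
  fixes U :: "int \<Rightarrow> complex"
  shows "(\<Sum>k\<in>{a..a + int d}. U k - U (k + 1)) = U a - U (a + int d + 1)"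
proof (induction d)
  case 0 then show ?case by simp
next
  case (Suc d)
  have "{a..a + int (Suc d)} = insert (a + int d + 1) {a..a + int d}" by auto
  then show ?case using Suc by simp
qed

theorem theorem4p1:
  fixes f g :: "'a \<Rightarrow> 'a \<Rightarrow> complex"
    and a b :: "int \<Rightarrow> 'a"
    and m n :: int
  assumes fg: "perp f g"
    and g_anti: "\<And>x y. g x y = - g y x"
    and m_ge: "m \<ge> 0" and n_ge: "n \<ge> 1"
    and nz1: "\<And>j. -n \<le> j \<Longrightarrow> j \<le> m \<Longrightarrow> f (a j) (b m) \<noteq> 0"
    and nz2: "\<And>j. -n \<le> j \<Longrightarrow> j \<le> m \<Longrightarrow> j \<noteq> m \<Longrightarrow> g (b j) (b m) \<noteq> 0"
    and nz3: "\<And>j. -n \<le> j \<Longrightarrow> j \<le> m \<Longrightarrow> f (a j) (b (-n)) \<noteq> 0"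
    and nz4: "\<And>j. -n \<le> j \<Longrightarrow> j \<le> m \<Longrightarrow> j \<noteq> -n \<Longrightarrow> g (b j) (b (-n)) \<noteq> 0"
  shows "(\<Sum>k\<in>{-n..m}. f (a k) (b k)
            * (prodZ (\<lambda>j. g (b j) (b m)) m (k - 1) / prodZ (\<lambda>j. f (a j) (b m)) m k)
            * (prodZ (\<lambda>j. f (a j) (b (-n))) 1 (k - 1) / prodZ (\<lambda>j. g (b j) (b (-n))) 1 k)) = 0"
proof -
  define Fm where "Fm = (\<lambda>j. f (a j) (b m))"
  define Gm where "Gm = (\<lambda>j. g (b j) (b m))"
  define Fn where "Fn = (\<lambda>j. f (a j) (b (-n)))"
  define Gn where "Gn = (\<lambda>j. g (b j) (b (-n)))"
  define c where "c = g (b m) (b (-n))"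
  have gxx: "g x x = 0" for x using g_anti[of x x] by simp
  have c0: "c \<noteq> 0" using nz2[of "-n"] g_anti[of "b (-n)" "b m"] m_ge n_ge unfolding c_def by auto
  define U where "U k = prodZ Gm m (k-1) / prodZ Fm m (k-1) * (prodZ Fn 1 (k-1) / prodZ Gn 1 (k-1))" for k
  have termk: "f (a k) (b k) * (prodZ Gm m (k - 1) / prodZ Fm m k) * (prodZ Fn 1 (k - 1) / prodZ Gn 1 k)
      = (U k - U (k + 1)) / c" if k: "-n \<le> k" "k \<le> m" for k
  proof -
    have pe: "g (b k) (b m) * f (a k) (b (-n)) - g (b k) (b (-n)) * f (a k) (b m) + g (b m) (b (-n)) * f (a k) (b k) = 0"
      using fg unfolding perp_def by blast
    hence eq: "c * f (a k) (b k) = Gn k * Fm k - Gm k * Fn k"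
      unfolding c_def Gn_def Fm_def Gm_def Fn_def by (simp add: algebra_simps)
    have eq2: "f (a k) (b k) = (Gn k * Fm k - Gm k * Fn k) / c"
      using eq c0 by (simp add: field_simps mult.commute)
    have pF: "prodZ Fm m k = prodZ Fm m (k-1) * Fm k"
      using nz1 k by (intro prodZ_step) (simp add: Fm_def)
    have pG: "prodZ Gm m k = prodZ Gm m (k-1) * Gm k"
      using nz2 k by (intro prodZ_step) (auto simp add: Gm_def)
    have pFn: "prodZ Fn 1 k = prodZ Fn 1 (k-1) * Fn k"
      using nz3 k by (intro prodZ_step) (simp add: Fn_def)
    have U1: "U (k+1) = prodZ Gm m (k-1) * Gm k / (prodZ Fm m (k-1) * Fm k) * (prodZ Fn 1 (k-1) * Fn k / prodZ Gn 1 k)"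
      unfolding U_def using pF pG pFn by simp
    have Fk: "Fm k \<noteq> 0" using nz1 k by (simp add: Fm_def)
    show ?thesis
    proof (cases "k = -n")
      case True
      have Gnk: "Gn k = 0" using True gxx by (simp add: Gn_def)
      have "prodZ Gn 1 (k-1) = 0"
      proof -
        have "(\<Prod>j\<in>{k..0}. Gn j) = 0" using Gnk True n_ge
          by (intro prod_zero) auto
        then show ?thesis using True n_ge by (simp add: prodZ_def)
      qed
      then have U0: "U k = 0" by (simp add: U_def)
      show ?thesis unfolding eq2 U0 U1 pF using Gnk c0 Fk
        by (cases "prodZ Fm m (k-1) = 0"; cases "prodZ Gn 1 k = 0"; simp add: field_simps)
    next
      case False
      have pGn: "prodZ Gn 1 k = prodZ Gn 1 (k-1) * Gn k"
        using nz4 k False by (intro prodZ_step) (simp add: Gn_def)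
      have Gnk: "Gn k \<noteq> 0" using nz4 k False by (simp add: Gn_def)
      show ?thesis unfolding eq2 U1 pF pGn unfolding U_def using c0 Fk Gnk
        by (cases "prodZ Fm m (k-1) = 0"; cases "prodZ Gn 1 (k-1) = 0"; simp add: field_simps)
    qed
  qed
  have "(\<Sum>k\<in>{-n..m}. f (a k) (b k)
            * (prodZ Gm m (k - 1) / prodZ Fm m k)
            * (prodZ Fn 1 (k - 1) / prodZ Gn 1 k)) = (\<Sum>k\<in>{-n..m}. (U k - U (k + 1)) / c)"
    using termk by (intro sum.cong) auto
  also have "\<dots> = (\<Sum>k\<in>{-n..m}. U k - U (k + 1)) / c" by (simp add: sum_divide_distrib)
  also have "(\<Sum>k\<in>{-n..m}. U k - U (k + 1)) = U (-n) - U (m + 1)"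
    using telescope_int[of U "-n" "nat (m + n)"] m_ge n_ge by simp
  also have "U (m+1) = 0" by (simp add: U_def prodZ_def Gm_def gxx)
  also have "U (-n) = 0"
  proof -
    have "(\<Prod>j\<in>{-n..0}. Gn j) = 0" using n_ge gxx by (intro prod_zero) (auto simp: Gn_def intro!: bexI[of _ "-n"])
    then show ?thesis using n_ge by (simp add: U_def prodZ_def)
  qed
  finally show ?thesis unfolding Fm_def Gm_def Fn_def Gn_def by simp
qed

end
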